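(* Let $1\le\nu<\infty$, let $\phi(z)=az+b$ with $|a|=1$, $b\in\mathbb{C}$, and let $w$ be an entire function such that $W_{w,\phi}$ is bounded on $\mathcal{F}^\nu$. Then $W_{w,\phi}$ is power-bounded on $\mathcal{F}^\nu$ if and only if $|w(0)|\le e^{-|b|^2/2}$.
   Context: For $1\le\nu<\infty$, $\mathcal{F}^\nu$ is the space of entire functions $f$ with $\|f\|_\nu:=\left(\frac{\nu}{2\pi}\int_{\mathbb{C}}|f(z)|^\nu e^{-\nu|z|^2/2}\,dm(z)\right)^{1/\nu}<\infty$. $W_{w,\phi}f=w\,(f\circ\phi)$. An operator $T$ is power-bounded if $\sup_{n\ge1}\|T^n\|<\infty$. (For $|a|=1$ and $w\not\equiv0$, boundedness of $W_{w,\phi}$ on $\mathcal{F}^\nu$ forces $w(z)=w(0)e^{-\overline{b}az}$.) *)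

theory Defs
  imports "HOL-Analysis.Analysis"
begin

definition wcomp :: "(complex \<Rightarrow> complex) \<Rightarrow> (complex \<Rightarrow> complex) \<Rightarrow> (complex \<Rightarrow> complex) \<Rightarrow> (complex \<Rightarrow> complex)"
  where "wcomp w \<phi> f = (\<lambda>z. w z * f (\<phi> z))"

definition fock_integral :: "real \<Rightarrow> (complex \<Rightarrow> complex) \<Rightarrow> ennreal"
  where "fock_integral \<nu> f =
    (\<integral>\<^sup>+ z. ennreal (cmod (f z) powr \<nu> * exp (- \<nu> * (cmod z)\<^sup>2 / 2)) \<partial>lborel)"

definition fock_space :: "real \<Rightarrow> (complex \<Rightarrow> complex) set"
  where "fock_space \<nu> = {f. f holomorphic_on UNIV \<and> fock_integral \<nu> f < \<infinity>}"

definition fock_norm :: "real \<Rightarrow> (complex \<Rightarrow> complex) \<Rightarrow> real"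
  where "fock_norm \<nu> f = (\<nu> / (2 * pi) * enn2real (fock_integral \<nu> f)) powr (1 / \<nu>)"

definition bounded_on_fock :: "real \<Rightarrow> ((complex \<Rightarrow> complex) \<Rightarrow> (complex \<Rightarrow> complex)) \<Rightarrow> bool"
  where "bounded_on_fock \<nu> T \<longleftrightarrow>
    (\<forall>f \<in> fock_space \<nu>. T f \<in> fock_space \<nu>) \<and>
    (\<exists>C. \<forall>f \<in> fock_space \<nu>. fock_norm \<nu> (T f) \<le> C * fock_norm \<nu> f)"

definition power_bounded_on_fock :: "real \<Rightarrow> ((complex \<Rightarrow> complex) \<Rightarrow> (complex \<Rightarrow> complex)) \<Rightarrow> bool"
  where "power_bounded_on_fock \<nu> T \<longleftrightarrow>
    (\<exists>C. \<forall>n \<ge> 1. \<forall>f \<in> fock_space \<nu>. fock_norm \<nu> ((T ^^ n) f) \<le> C * fock_norm \<nu> f)"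

end

theory Submission
  imports Defs "HOL-Probability.Distributions" "HOL-Complex_Analysis.Complex_Analysis"
begin
lemma lborel_complex_pair:
  "(lborel :: complex measure) = distr (lborel \<Otimes>\<^sub>M lborel) borel (\<lambda>(x,y). Complex x y)"
proof (rule lborel_eqI)
  fix l u :: complex
  assume le: "\<And>b. b \<in> Basis \<Longrightarrow> l \<bullet> b \<le> u \<bullet> b"
  have m: "(\<lambda>(x,y). Complex x y) \<in> (lborel \<Otimes>\<^sub>M lborel) \<rightarrow>\<^sub>M (borel :: complex measure)"
    unfolding lborel_prod measurable_lborel2 by (intro borel_measurable_continuous_onI) (auto intro!: continuous_intros simp: case_prod_unfold)
  have pre: "(\<lambda>(x,y). Complex x y) -` box l u \<inter> space (lborel \<Otimes>\<^sub>M lborel) = box (Re l) (Re u) \<times> box (Im l) (Im u)"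
    by (auto simp: box_def Basis_complex_def space_pair_measure)
  have "emeasure (distr (lborel \<Otimes>\<^sub>M lborel) borel (\<lambda>(x,y). Complex x y)) (box l u)
      = emeasure (lborel \<Otimes>\<^sub>M lborel) (box (Re l) (Re u) \<times> box (Im l) (Im u))"
    using m by (simp add: emeasure_distr pre)
  also have "\<dots> = emeasure lborel (box (Re l) (Re u)) * emeasure lborel (box (Im l) (Im u))"
    by (simp add: lborel.emeasure_pair_measure_Times)
  also have "\<dots> = (\<Prod>b\<in>Basis. (u - l) \<bullet> b)"
    using le[of 1] le[of \<i>] by (simp add: Basis_complex_def ennreal_mult' inner_complex_def)
  finally show "emeasure (distr (lborel \<Otimes>\<^sub>M lborel) borel (\<lambda>(x,y). Complex x y)) (box l u) = (\<Prod>b\<in>Basis. (u - l) \<bullet> b)" .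
qed simp

lemma shear_x:
  fixes G :: "real \<times> real \<Rightarrow> ennreal"
  assumes G[measurable]: "G \<in> borel_measurable (lborel \<Otimes>\<^sub>M lborel)"
  shows "(\<integral>\<^sup>+ p. G (fst p + t * snd p, snd p) \<partial>(lborel \<Otimes>\<^sub>M lborel)) = (\<integral>\<^sup>+ p. G p \<partial>(lborel \<Otimes>\<^sub>M lborel))"
proof -
  have S: "(\<lambda>p. (fst p + t * snd p, snd p)) \<in> (lborel \<Otimes>\<^sub>M lborel) \<rightarrow>\<^sub>M (lborel \<Otimes>\<^sub>M lborel)"
    unfolding lborel_prod measurable_lborel1 measurable_lborel2
    by (intro borel_measurable_continuous_onI continuous_intros)
  have [measurable]: "(\<lambda>p. G (fst p + t * snd p, snd p)) \<in> borel_measurable (lborel \<Otimes>\<^sub>M lborel)"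
    using measurable_compose[OF S G] by (simp add: o_def)
  have "(\<integral>\<^sup>+ p. G (fst p + t * snd p, snd p) \<partial>(lborel \<Otimes>\<^sub>M lborel)) = (\<integral>\<^sup>+ y. \<integral>\<^sup>+ x. G (x + t * y, y) \<partial>lborel \<partial>lborel)"
    by (subst lborel_pair.nn_integral_snd[symmetric]) (auto simp: case_prod_unfold)
  also have "\<dots> = (\<integral>\<^sup>+ y. \<integral>\<^sup>+ x. G (x, y) \<partial>lborel \<partial>lborel)"
  proof (rule nn_integral_cong)
    fix y :: real
    have m: "(\<lambda>x. G (x, y)) \<in> borel_measurable borel" by measurable
    show "(\<integral>\<^sup>+ x. G (x + t * y, y) \<partial>lborel) = (\<integral>\<^sup>+ x. G (x, y) \<partial>lborel)"
      using nn_integral_real_affine[OF m, of 1 "t*y"] by (simp add: add.commute)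
  qed
  also have "\<dots> = (\<integral>\<^sup>+ p. G p \<partial>(lborel \<Otimes>\<^sub>M lborel))"
    by (subst lborel_pair.nn_integral_snd[symmetric]) auto
  finally show ?thesis .
qed

lemma shear_y:
  fixes G :: "real \<times> real \<Rightarrow> ennreal"
  assumes G[measurable]: "G \<in> borel_measurable (lborel \<Otimes>\<^sub>M lborel)"
  shows "(\<integral>\<^sup>+ p. G (fst p, snd p + t * fst p) \<partial>(lborel \<Otimes>\<^sub>M lborel)) = (\<integral>\<^sup>+ p. G p \<partial>(lborel \<Otimes>\<^sub>M lborel))"
proof -
  have S: "(\<lambda>p. (fst p, snd p + t * fst p)) \<in> (lborel \<Otimes>\<^sub>M lborel) \<rightarrow>\<^sub>M (lborel \<Otimes>\<^sub>M lborel)"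
    unfolding lborel_prod measurable_lborel1 measurable_lborel2
    by (intro borel_measurable_continuous_onI continuous_intros)
  have [measurable]: "(\<lambda>p. G (fst p, snd p + t * fst p)) \<in> borel_measurable (lborel \<Otimes>\<^sub>M lborel)"
    using measurable_compose[OF S G] by (simp add: o_def)
  have "(\<integral>\<^sup>+ p. G (fst p, snd p + t * fst p) \<partial>(lborel \<Otimes>\<^sub>M lborel)) = (\<integral>\<^sup>+ x. \<integral>\<^sup>+ y. G (x, y + t * x) \<partial>lborel \<partial>lborel)"
    by (subst lborel.nn_integral_fst[symmetric]) (auto simp: case_prod_unfold)
  also have "\<dots> = (\<integral>\<^sup>+ x. \<integral>\<^sup>+ y. G (x, y) \<partial>lborel \<partial>lborel)"
  proof (rule nn_integral_cong)
    fix x :: real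
    have m: "(\<lambda>y. G (x, y)) \<in> borel_measurable borel" by measurable
    show "(\<integral>\<^sup>+ y. G (x, y + t * x) \<partial>lborel) = (\<integral>\<^sup>+ y. G (x, y) \<partial>lborel)"
      using nn_integral_real_affine[OF m, of 1 "t*x"] by (simp add: add.commute)
  qed
  also have "\<dots> = (\<integral>\<^sup>+ p. G p \<partial>(lborel \<Otimes>\<^sub>M lborel))"
    by (subst lborel.nn_integral_fst[symmetric]) auto
  finally show ?thesis .
qed

lemma lin_meas:
  "(\<lambda>p::real\<times>real. (c11* fst p + c12* snd p, c21* fst p + c22* snd p)) \<in> (lborel \<Otimes>\<^sub>M lborel) \<rightarrow>\<^sub>M (lborel \<Otimes>\<^sub>M lborel)"
  unfolding lborel_prod measurable_lborel1 measurable_lborel2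
  by (intro borel_measurable_continuous_onI continuous_intros)

lemma lin_comp_meas:
  fixes G :: "real \<times> real \<Rightarrow> ennreal"
  assumes "G \<in> borel_measurable (lborel \<Otimes>\<^sub>M lborel)"
  shows "(\<lambda>p. G (c11* fst p + c12* snd p, c21* fst p + c22* snd p)) \<in> borel_measurable (lborel \<Otimes>\<^sub>M lborel)"
  using measurable_compose[OF lin_meas assms] by (simp add: o_def)

lemma rot_pair_aux:
  fixes G :: "real \<times> real \<Rightarrow> ennreal"
  assumes G: "G \<in> borel_measurable (lborel \<Otimes>\<^sub>M lborel)" and ab: "\<alpha>\<^sup>2 + \<beta>\<^sup>2 = 1" and an: "\<alpha> \<noteq> -1"
  shows "(\<integral>\<^sup>+ p. G (\<alpha>* fst p - \<beta>* snd p, \<beta>* fst p + \<alpha>* snd p) \<partial>(lborel \<Otimes>\<^sub>M lborel)) = (\<integral>\<^sup>+ p. G p \<partial>(lborel \<Otimes>\<^sub>M lborel))"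
proof -
  define t where "t = - \<beta> / (1 + \<alpha>)"
  define s where "s = \<beta>"
  have a1: "1 + \<alpha> \<noteq> 0" using an by auto
  have bb: "\<beta>\<^sup>2 = (1 - \<alpha>) * (1 + \<alpha>)" using ab by (simp add: algebra_simps power2_eq_square)
  have e1: "1 + t * s = \<alpha>"
    unfolding t_def s_def using a1 bb by (simp add: field_simps power2_eq_square, (simp add: algebra_simps)?)
  have "2 + s * t = 1 + \<alpha>" using e1 by (simp add: mult.commute)
  then have e2: "t * (2 + s * t) = - \<beta>"
  proof -
    assume h: "2 + s * t = 1 + \<alpha>"
    have "t * (2 + s * t) = t * (1 + \<alpha>)" by (simp only: h)
    also have "\<dots> = - \<beta>" unfolding t_def using a1 by simp
    finally show ?thesis .
  qed
  define G1 where "G1 = (\<lambda>q. G (fst q + t * (snd q + s * fst q), snd q + s * fst q))"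
  define G2 where "G2 = (\<lambda>q. G (fst q + t * snd q, snd q))"
  have G1m: "G1 \<in> borel_measurable (lborel \<Otimes>\<^sub>M lborel)"
    using lin_comp_meas[OF G, of "1 + t * s" t s 1] unfolding G1_def by (simp add: algebra_simps)
  have G2m: "G2 \<in> borel_measurable (lborel \<Otimes>\<^sub>M lborel)"
    using lin_comp_meas[OF G, of 1 t 0 1] unfolding G2_def by simp
  have "(\<integral>\<^sup>+ p. G (\<alpha>* fst p - \<beta>* snd p, \<beta>* fst p + \<alpha>* snd p) \<partial>(lborel \<Otimes>\<^sub>M lborel))
      = (\<integral>\<^sup>+ p. G1 (fst p + t * snd p, snd p) \<partial>(lborel \<Otimes>\<^sub>M lborel))"
  proof (rule nn_integral_cong)
    fix p :: "real \<times> real"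
    have "fst p + t * snd p + t * (snd p + s * (fst p + t * snd p)) = (1 + t* s) * fst p + t * (2 + s*t) * snd p"
      by (simp add: algebra_simps)
    moreover have "snd p + s * (fst p + t * snd p) = s * fst p + (1 + t* s) * snd p"
      by (simp add: algebra_simps)
    ultimately show "G (\<alpha>* fst p - \<beta>* snd p, \<beta>* fst p + \<alpha>* snd p) = G1 (fst p + t * snd p, snd p)"
      unfolding G1_def using e1 e2 by (simp add: s_def)
  qed
  also have "\<dots> = (\<integral>\<^sup>+ p. G1 p \<partial>(lborel \<Otimes>\<^sub>M lborel))"
    by (rule shear_x[OF G1m])
  also have "\<dots> = (\<integral>\<^sup>+ p. G2 (fst p, snd p + s * fst p) \<partial>(lborel \<Otimes>\<^sub>M lborel))"
    unfolding G1_def G2_def by simp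
  also have "\<dots> = (\<integral>\<^sup>+ p. G2 p \<partial>(lborel \<Otimes>\<^sub>M lborel))"
    by (rule shear_y[OF G2m])
  also have "\<dots> = (\<integral>\<^sup>+ p. G p \<partial>(lborel \<Otimes>\<^sub>M lborel))"
    unfolding G2_def by (rule shear_x[OF G])
  finally show ?thesis .
qed

lemma rot_pair:
  fixes G :: "real \<times> real \<Rightarrow> ennreal"
  assumes G: "G \<in> borel_measurable (lborel \<Otimes>\<^sub>M lborel)" and ab: "\<alpha>\<^sup>2 + \<beta>\<^sup>2 = 1"
  shows "(\<integral>\<^sup>+ p. G (\<alpha>* fst p - \<beta>* snd p, \<beta>* fst p + \<alpha>* snd p) \<partial>(lborel \<Otimes>\<^sub>M lborel)) = (\<integral>\<^sup>+ p. G p \<partial>(lborel \<Otimes>\<^sub>M lborel))"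
proof (cases "\<alpha> = -1")
  case False
  then show ?thesis using rot_pair_aux[OF G ab] by simp
next
  case True
  then have b0: "\<beta> = 0" using ab by (simp add: power2_eq_square)
  define G1 where "G1 = (\<lambda>q. G (- snd q, fst q))"
  have G1m: "G1 \<in> borel_measurable (lborel \<Otimes>\<^sub>M lborel)"
    using lin_comp_meas[OF G, of 0 "-1" 1 0] unfolding G1_def by simp
  have "(\<integral>\<^sup>+ p. G (\<alpha>* fst p - \<beta>* snd p, \<beta>* fst p + \<alpha>* snd p) \<partial>(lborel \<Otimes>\<^sub>M lborel))
      = (\<integral>\<^sup>+ p. G1 (0* fst p - 1* snd p, 1* fst p + 0* snd p) \<partial>(lborel \<Otimes>\<^sub>M lborel))"
    unfolding G1_def using True b0 by simp
  also have "\<dots> = (\<integral>\<^sup>+ p. G1 p \<partial>(lborel \<Otimes>\<^sub>M lborel))"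
    by (rule rot_pair_aux[OF G1m]) auto
  also have "\<dots> = (\<integral>\<^sup>+ p. G (0* fst p - 1* snd p, 1* fst p + 0* snd p) \<partial>(lborel \<Otimes>\<^sub>M lborel))"
    unfolding G1_def by simp
  also have "\<dots> = (\<integral>\<^sup>+ p. G p \<partial>(lborel \<Otimes>\<^sub>M lborel))"
    by (rule rot_pair_aux[OF G]) auto
  finally show ?thesis .
qed

lemma nn_integral_complex_pair:
  fixes G :: "complex \<Rightarrow> ennreal"
  assumes G: "G \<in> borel_measurable borel"
  shows "(\<integral>\<^sup>+ z. G z \<partial>lborel) = (\<integral>\<^sup>+ p. G (Complex (fst p) (snd p)) \<partial>(lborel \<Otimes>\<^sub>M lborel))"
proof -
  have m: "(\<lambda>(x,y). Complex x y) \<in> (lborel \<Otimes>\<^sub>M lborel) \<rightarrow>\<^sub>M (borel :: complex measure)"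
    unfolding lborel_prod measurable_lborel2 by (intro borel_measurable_continuous_onI) (auto intro!: continuous_intros simp: case_prod_unfold)
  show ?thesis
    by (subst lborel_complex_pair, subst nn_integral_distr[OF m], simp add: G, simp add: case_prod_unfold)
qed

lemma nn_integral_rotate_translate:
  fixes G :: "complex \<Rightarrow> ennreal" and a b :: complex
  assumes G: "G \<in> borel_measurable borel" and a: "cmod a = 1"
  shows "(\<integral>\<^sup>+ z. G (a * z + b) \<partial>lborel) = (\<integral>\<^sup>+ z. G z \<partial>lborel)"
proof -
  have Gb: "(\<lambda>z. G (z + b)) \<in> borel_measurable borel"
    using G by measurable
  have Ga: "(\<lambda>z. G (a * z + b)) \<in> borel_measurable borel"
    using G by measurable
  have ab: "(Re a)\<^sup>2 + (Im a)\<^sup>2 = 1"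
    using a by (simp add: cmod_def)
  have Gp: "(\<lambda>p. G (Complex (fst p) (snd p) + b)) \<in> borel_measurable (lborel \<Otimes>\<^sub>M lborel)"
  proof -
    have m: "(\<lambda>p. Complex (fst p) (snd p) + b) \<in> (lborel \<Otimes>\<^sub>M lborel) \<rightarrow>\<^sub>M (borel :: complex measure)"
      unfolding lborel_prod measurable_lborel2 by (intro borel_measurable_continuous_onI) (auto intro!: continuous_intros)
    show ?thesis using measurable_compose[OF m G] by (simp add: o_def)
  qed
  have "(\<integral>\<^sup>+ z. G (a * z + b) \<partial>lborel) = (\<integral>\<^sup>+ p. G (a * Complex (fst p) (snd p) + b) \<partial>(lborel \<Otimes>\<^sub>M lborel))"
    by (rule nn_integral_complex_pair[OF Ga])
  also have "\<dots> = (\<integral>\<^sup>+ p. G (Complex (Re a * fst p - Im a * snd p) (Im a * fst p + Re a * snd p) + b) \<partial>(lborel \<Otimes>\<^sub>M lborel))"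
    by (intro nn_integral_cong, rule arg_cong[where f=G]) (simp add: complex_eq_iff)
  also have "\<dots> = (\<integral>\<^sup>+ p. G (Complex (fst p) (snd p) + b) \<partial>(lborel \<Otimes>\<^sub>M lborel))"
    using rot_pair[OF Gp ab] by simp
  also have "\<dots> = (\<integral>\<^sup>+ z. G (z + b) \<partial>lborel)"
    by (rule nn_integral_complex_pair[OF Gb, symmetric])
  also have "\<dots> = (\<integral>\<^sup>+ z. G z \<partial>lborel)"
    using nn_integral_distr[of "(+) b" lborel borel G] G lborel_distr_plus[of b]
    by (simp add: add.commute)
  finally show ?thesis .
qed


lemma gauss_real_finite: "(\<integral>\<^sup>+ x. ennreal (exp (- x\<^sup>2 / 2)) \<partial>lborel) < \<infinity>"
proof -
  have "(\<integral>\<^sup>+ x. ennreal (exp (- x\<^sup>2 / 2)) \<partial>lborel) = (\<integral>\<^sup>+ x. ennreal (sqrt (2 * pi)) * ennreal (std_normal_density x) \<partial>lborel)"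
    by (intro nn_integral_cong) (simp add: std_normal_density_def flip: ennreal_mult)
  also have "\<dots> = ennreal (sqrt (2 * pi)) * (\<integral>\<^sup>+ x. ennreal (std_normal_density x) \<partial>lborel)"
    by (rule nn_integral_cmult) simp
  also have "(\<integral>\<^sup>+ x. ennreal (std_normal_density x) \<partial>lborel) = 1"
    by (simp add: nn_integral_eq_integral normal_density_nonneg)
  finally show ?thesis by simp
qed

lemma gauss_complex_finite: "(\<integral>\<^sup>+ z. ennreal (exp (- (cmod z)\<^sup>2 / 2)) \<partial>lborel) < \<infinity>"
proof -
  let ?g = "\<lambda>x::real. ennreal (exp (- x\<^sup>2 / 2))"
  have m: "(\<lambda>z::complex. ennreal (exp (- (cmod z)\<^sup>2 / 2))) \<in> borel_measurable borel"
    by measurable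
  have "(\<integral>\<^sup>+ z. ennreal (exp (- (cmod z)\<^sup>2 / 2)) \<partial>lborel)
     = (\<integral>\<^sup>+ p. ennreal (exp (- (cmod (Complex (fst p) (snd p)))\<^sup>2 / 2)) \<partial>(lborel \<Otimes>\<^sub>M lborel))"
    by (rule nn_integral_complex_pair[OF m])
  also have "\<dots> = (\<integral>\<^sup>+ p. ?g (fst p) * ?g (snd p) \<partial>(lborel \<Otimes>\<^sub>M lborel))"
    by (intro nn_integral_cong) (simp add: cmod_power2 exp_add[symmetric] ennreal_mult[symmetric] add_divide_distrib)
  also have "\<dots> = (\<integral>\<^sup>+ x. \<integral>\<^sup>+ y. ?g x * ?g y \<partial>lborel \<partial>lborel)"
    by (subst lborel.nn_integral_fst[symmetric]) auto
  also have "\<dots> = (\<integral>\<^sup>+ x. ?g x * (\<integral>\<^sup>+ y. ?g y \<partial>lborel) \<partial>lborel)"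
    by (intro nn_integral_cong nn_integral_cmult) auto
  also have "\<dots> = (\<integral>\<^sup>+ x. ?g x \<partial>lborel) * (\<integral>\<^sup>+ y. ?g y \<partial>lborel)"
    by (rule nn_integral_multc) auto
  also have "\<dots> < \<infinity>"
    using gauss_real_finite by (simp add: ennreal_mult_less_top)
  finally show ?thesis .
qed

lemma fock_integral_alt:
  assumes "\<nu> > 0"
  shows "fock_integral \<nu> F = (\<integral>\<^sup>+ z. ennreal ((cmod (F z) * exp (- (cmod z)\<^sup>2 / 2)) powr \<nu>) \<partial>lborel)"
  unfolding fock_integral_def
  by (intro nn_integral_cong) (simp add: powr_mult exp_powr_real mult.commute)

lemma fock_one_finite:
  assumes "\<nu> \<ge> 1"
  shows "fock_integral \<nu> (\<lambda>_. 1) < \<infinity>"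
proof -
  have "fock_integral \<nu> (\<lambda>_. 1) \<le> (\<integral>\<^sup>+ z. ennreal (exp (- (cmod z)\<^sup>2 / 2)) \<partial>lborel)"
    unfolding fock_integral_def
  proof (intro nn_integral_mono ennreal_leI)
    fix z :: complex
    have "(cmod z)\<^sup>2 \<le> \<nu> * (cmod z)\<^sup>2"
      using mult_right_mono[OF assms, of "(cmod z)\<^sup>2"] by simp
    then have "- \<nu> * (cmod z)\<^sup>2 / 2 \<le> - (cmod z)\<^sup>2 / 2"
      by simp
    then show "cmod 1 powr \<nu> * exp (- \<nu> * (cmod z)\<^sup>2 / 2) \<le> exp (- (cmod z)\<^sup>2 / 2)"
      by simp
  qed
  also have "\<dots> < \<infinity>" by (rule gauss_complex_finite)
  finally show ?thesis .
qed

lemma fock_lower_ball: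
  assumes "\<nu> > 0" "0 \<le> m" "\<And>u. u \<in> ball u0 r \<Longrightarrow> m \<le> cmod (F u)"
  shows "ennreal (m powr \<nu> * exp (- \<nu> * (cmod u0 + r)\<^sup>2 / 2)) * emeasure lborel (ball u0 r) \<le> fock_integral \<nu> F"
proof -
  have "ennreal (m powr \<nu> * exp (- \<nu> * (cmod u0 + r)\<^sup>2 / 2)) * emeasure lborel (ball u0 r)
     = (\<integral>\<^sup>+ u. ennreal (m powr \<nu> * exp (- \<nu> * (cmod u0 + r)\<^sup>2 / 2)) * indicator (ball u0 r) u \<partial>lborel)"
    by (rule nn_integral_cmult_indicator[symmetric]) simp
  also have "\<dots> \<le> fock_integral \<nu> F"
    unfolding fock_integral_def
  proof (intro nn_integral_mono)
    fix u :: complex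
    show "ennreal (m powr \<nu> * exp (- \<nu> * (cmod u0 + r)\<^sup>2 / 2)) * indicator (ball u0 r) u
        \<le> ennreal (cmod (F u) powr \<nu> * exp (- \<nu> * (cmod u)\<^sup>2 / 2))"
    proof (cases "u \<in> ball u0 r")
      case True
      have "cmod u \<le> cmod u0 + dist u0 u"
        by (metis dist_norm norm_triangle_sub add.commute norm_minus_commute)
      then have cu: "cmod u \<le> cmod u0 + r" using True by simp
      have "(cmod u)\<^sup>2 \<le> (cmod u0 + r)\<^sup>2"
        using cu by (intro power_mono) auto
      then have e: "exp (- \<nu> * (cmod u0 + r)\<^sup>2 / 2) \<le> exp (- \<nu> * (cmod u)\<^sup>2 / 2)"
        using assms(1) by (simp add: mult_left_mono)
      have p: "m powr \<nu> \<le> cmod (F u) powr \<nu>"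
        using assms True by (intro powr_mono2) auto
      show ?thesis using True e p
        by (simp add: ennreal_leI mult_mono)
    qed simp
  qed
  finally show ?thesis .
qed

lemma fock_norm_scale:
  assumes "\<nu> > 0" "k \<ge> 0" "fock_integral \<nu> g = ennreal (k powr \<nu>) * fock_integral \<nu> f"
  shows "fock_norm \<nu> g = k * fock_norm \<nu> f"
proof -
  have "enn2real (fock_integral \<nu> g) = k powr \<nu> * enn2real (fock_integral \<nu> f)"
    using assms by (simp add: enn2real_mult)
  then have "fock_norm \<nu> g = (k powr \<nu> * (\<nu> / (2 * pi) * enn2real (fock_integral \<nu> f))) powr (1 / \<nu>)"
    unfolding fock_norm_def by (simp add: ac_simps)
  also have "\<dots> = (k powr \<nu>) powr (1 / \<nu>) * (\<nu> / (2 * pi) * enn2real (fock_integral \<nu> f)) powr (1 / \<nu>)"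
    by (rule powr_mult; use assms in auto)
  also have "(k powr \<nu>) powr (1 / \<nu>) = k"
    using assms by (simp add: powr_powr)
  finally show ?thesis unfolding fock_norm_def .
qed

lemma fock_norm_to_int:
  assumes "\<nu> > 0" "K \<ge> 0" "fock_norm \<nu> g \<le> K * fock_norm \<nu> f"
  shows "enn2real (fock_integral \<nu> g) \<le> K powr \<nu> * enn2real (fock_integral \<nu> f)"
proof -
  define Eg where "Eg = \<nu> / (2 * pi) * enn2real (fock_integral \<nu> g)"
  define Ef where "Ef = \<nu> / (2 * pi) * enn2real (fock_integral \<nu> f)"
  have Eg0: "Eg \<ge> 0" and Ef0: "Ef \<ge> 0" unfolding Eg_def Ef_def using assms by auto
  have "Eg = (Eg powr (1/\<nu>)) powr \<nu>"
    using assms Eg0 by (simp add: powr_powr)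
  also have "\<dots> \<le> (K * Ef powr (1/\<nu>)) powr \<nu>"
    using assms(1,3) unfolding fock_norm_def Eg_def[symmetric] Ef_def[symmetric]
    by (intro powr_mono2) auto
  also have "\<dots> = K powr \<nu> * (Ef powr (1/\<nu>)) powr \<nu>"
    using assms by (simp add: powr_mult)
  also have "(Ef powr (1/\<nu>)) powr \<nu> = Ef"
    using assms Ef0 by (simp add: powr_powr)
  finally have "Eg \<le> K powr \<nu> * Ef" .
  then show ?thesis unfolding Eg_def Ef_def using assms
    by (simp add: field_simps)
qed

lemma powr_pow_swap:
  fixes m :: real
  assumes "m \<ge> 0"
  shows "(m ^ n) powr \<nu> = (m powr \<nu>) ^ n"
  using assms by (induction n) (simp_all add: powr_mult)

lemma geometric_contra:
  fixes X Y p q :: real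
  assumes "0 \<le> Y" "Y < X" "p > 0" "\<And>n. X ^ n * p \<le> Y ^ n * q"
  shows False
proof -
  have X0: "X > 0" using assms by linarith
  have lim: "(\<lambda>n. (Y / X) ^ n * q) \<longlonglongrightarrow> 0 * q"
    using assms X0 by (intro tendsto_mult LIMSEQ_power_zero tendsto_const) simp
  have "\<And>n. p \<le> (Y / X) ^ n * q"
  proof -
    fix n
    have "X ^ n * p \<le> Y ^ n * q" by (rule assms(4))
    then have "p \<le> Y ^ n * q / X ^ n" using X0 by (simp add: field_simps)
    then show "p \<le> (Y / X) ^ n * q" by (simp add: power_divide)
  qed
  then have "p \<le> 0 * q"
    using lim by (intro LIMSEQ_le_const) auto
  then show False using assms by simp
qed


lemma holo_affine_comp:
  assumes "F holomorphic_on UNIV"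
  shows "(\<lambda>z. F (a * z + b)) holomorphic_on UNIV"
proof -
  have "(F \<circ> (\<lambda>z. a * z + b)) holomorphic_on UNIV"
    by (rule holomorphic_on_compose) (auto intro!: holomorphic_intros holomorphic_on_subset[OF assms])
  then show ?thesis by (simp add: o_def)
qed

lemma wcomp_holo:
  assumes "w holomorphic_on UNIV" "F holomorphic_on UNIV"
  shows "wcomp w (\<lambda>z. a * z + b) F holomorphic_on UNIV"
  unfolding wcomp_def using holo_affine_comp[OF assms(2)] assms(1)
  by (intro holomorphic_intros) auto

lemma norm_affine_sq:
  assumes "cmod a = 1"
  shows "(cmod (a * z + b))\<^sup>2 = (cmod z)\<^sup>2 + 2 * Re (cnj b * (a * z)) + (cmod b)\<^sup>2"
proof -
  have ab: "(Re a)\<^sup>2 + (Im a)\<^sup>2 = 1" using assms by (simp add: cmod_def)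
  have "(Re a * Re z - Im a * Im z)\<^sup>2 + (Re a * Im z + Im a * Re z)\<^sup>2 = ((Re a)\<^sup>2 + (Im a)\<^sup>2) * ((Re z)\<^sup>2 + (Im z)\<^sup>2)"
    by (simp add: power2_eq_square algebra_simps)
  then have k: "(Re a * Re z - Im a * Im z)\<^sup>2 + (Re a * Im z + Im a * Re z)\<^sup>2 = (Re z)\<^sup>2 + (Im z)\<^sup>2"
    using ab by simp
  show ?thesis
    unfolding cmod_power2 using k by (simp add: power2_eq_square algebra_simps)
qed

lemma cv_key:
  fixes a b :: complex and w F :: "complex \<Rightarrow> complex"
  assumes a: "cmod a = 1" and nu: "\<nu> > 0"
    and hF: "continuous_on UNIV (\<lambda>u. w (cnj a * (u - b)) * exp (cnj b * u - of_real ((cmod b)\<^sup>2 / 2)) * F u)"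
  shows "fock_integral \<nu> (wcomp w (\<lambda>z. a * z + b) F)
       = fock_integral \<nu> (\<lambda>u. w (cnj a * (u - b)) * exp (cnj b * u - of_real ((cmod b)\<^sup>2 / 2)) * F u)"
proof -
  define H where "H = (\<lambda>u. w (cnj a * (u - b)) * exp (cnj b * u - of_real ((cmod b)\<^sup>2 / 2)) * F u)"
  define G where "G = (\<lambda>u. ennreal ((cmod (H u) * exp (- (cmod u)\<^sup>2 / 2)) powr \<nu>))"
  have Hc: "continuous_on UNIV H" using hF unfolding H_def .
  have Hm: "H \<in> borel_measurable borel" using Hc by (rule borel_measurable_continuous_onI)
  have Gm: "G \<in> borel_measurable borel" unfolding G_def using Hm by measurable
  have aa: "cnj a * a = 1"
    using a by (metis complex_norm_square mult.commute of_real_1 power_one)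
  have pt: "G (a * z + b) = ennreal ((cmod (wcomp w (\<lambda>z. a * z + b) F z) * exp (- (cmod z)\<^sup>2 / 2)) powr \<nu>)" for z
  proof -
    have Hz: "H (a * z + b) = w z * exp (cnj b * (a * z + b) - of_real ((cmod b)\<^sup>2 / 2)) * F (a * z + b)"
      unfolding H_def by (simp add: mult.assoc[symmetric] aa)
    have bb: "Re (cnj b * b) = (cmod b)\<^sup>2"
      by (metis Re_complex_of_real complex_norm_square mult.commute of_real_power)
    have "Re (cnj b * (a * z + b) - of_real ((cmod b)\<^sup>2 / 2)) - (cmod (a * z + b))\<^sup>2 / 2 = - (cmod z)\<^sup>2 / 2"
      using bb norm_affine_sq[OF a, of z b] by (simp add: distrib_left field_simps)
    then have "exp (Re (cnj b * (a * z + b) - of_real ((cmod b)\<^sup>2 / 2))) * exp (- (cmod (a * z + b))\<^sup>2 / 2) = exp (- (cmod z)\<^sup>2 / 2)"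
      by (simp add: exp_add[symmetric])
    then have "cmod (H (a * z + b)) * exp (- (cmod (a * z + b))\<^sup>2 / 2) = cmod (w z * F (a * z + b)) * exp (- (cmod z)\<^sup>2 / 2)"
      unfolding Hz by (simp add: norm_mult norm_exp_eq_Re ac_simps)
    then show ?thesis unfolding G_def wcomp_def by simp
  qed
  have "fock_integral \<nu> (wcomp w (\<lambda>z. a * z + b) F) = (\<integral>\<^sup>+ z. G (a * z + b) \<partial>lborel)"
    unfolding fock_integral_alt[OF nu] pt ..
  also have "\<dots> = (\<integral>\<^sup>+ z. G z \<partial>lborel)"
    by (rule nn_integral_rotate_translate[OF Gm a])
  also have "\<dots> = fock_integral \<nu> H"
    unfolding fock_integral_alt[OF nu] G_def ..
  finally show ?thesis unfolding H_def .
qed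


theorem theorem3p1:
  fixes \<nu> :: real and a b :: complex and w :: "complex \<Rightarrow> complex"
  assumes "1 \<le> \<nu>"
    and "cmod a = 1"
    and "w holomorphic_on UNIV"
    and "bounded_on_fock \<nu> (wcomp w (\<lambda>z. a * z + b))"
  shows "power_bounded_on_fock \<nu> (wcomp w (\<lambda>z. a * z + b)) \<longleftrightarrow>
         cmod (w 0) \<le> exp (- (cmod b)\<^sup>2 / 2)"
proof -
  let ?W = "wcomp w (\<lambda>z. a * z + b)"
  have nu: "\<nu> > 0" using assms(1) by linarith
  define h where "h = (\<lambda>u. w (cnj a * (u - b)) * exp (cnj b * u - of_real ((cmod b)\<^sup>2 / 2)))"
  have w1: "(\<lambda>u. w (cnj a * (u - b))) holomorphic_on UNIV"
    using holo_affine_comp[OF assms(3), of "cnj a" "- (cnj a * b)"] by (simp add: algebra_simps)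
  have hhol: "h holomorphic_on UNIV"
    unfolding h_def using w1 by (intro holomorphic_intros) auto
  have hcont: "continuous_on UNIV h"
    using hhol by (rule holomorphic_on_imp_continuous_on)
  have cv: "fock_integral \<nu> (?W F) = fock_integral \<nu> (\<lambda>u. h u * F u)" if F: "F holomorphic_on UNIV" for F
  proof -
    have "continuous_on UNIV (\<lambda>u. h u * F u)"
      using hcont holomorphic_on_imp_continuous_on[OF F] by (intro continuous_intros) auto
    then show ?thesis
      using cv_key[OF assms(2) nu, where w=w and F=F and b=b] unfolding h_def by simp
  qed
  obtain C where CW: "\<forall>f\<in>fock_space \<nu>. ?W f \<in> fock_space \<nu>"
    and Cb: "\<forall>f\<in>fock_space \<nu>. fock_norm \<nu> (?W f) \<le> C * fock_norm \<nu> f"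
    using assms(4) unfolding bounded_on_fock_def by blast
  define M where "M = \<bar>C\<bar>"
  have M0: "M \<ge> 0" by (simp add: M_def)
  have one_fs: "(\<lambda>_. 1) \<in> fock_space \<nu>"
    unfolding fock_space_def using fock_one_finite[OF assms(1)] by auto
  have norm_nonneg: "fock_norm \<nu> f \<ge> 0" for f
    unfolding fock_norm_def by simp
  have hn: "(\<lambda>u. h u ^ n) \<in> fock_space \<nu> \<and> fock_norm \<nu> (\<lambda>u. h u ^ n) \<le> M ^ n * fock_norm \<nu> (\<lambda>_. 1)" for n
  proof (induction n)
    case 0
    show ?case using one_fs by simp
  next
    case (Suc n)
    let ?F = "\<lambda>u. h u ^ n"
    have Fh: "?F holomorphic_on UNIV" using hhol by (intro holomorphic_intros)
    have e: "fock_integral \<nu> (?W ?F) = fock_integral \<nu> (\<lambda>u. h u ^ Suc n)"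
      using cv[OF Fh] by simp
    have WF: "?W ?F \<in> fock_space \<nu>" using CW Suc.IH by blast
    have mem: "(\<lambda>u. h u ^ Suc n) \<in> fock_space \<nu>"
      using WF e hhol unfolding fock_space_def by (auto intro!: holomorphic_intros)
    have "fock_norm \<nu> (\<lambda>u. h u ^ Suc n) = fock_norm \<nu> (?W ?F)"
      unfolding fock_norm_def e ..
    also have "\<dots> \<le> C * fock_norm \<nu> ?F" using Cb Suc.IH by blast
    also have "\<dots> \<le> M * fock_norm \<nu> ?F"
      unfolding M_def using norm_nonneg by (intro mult_right_mono) auto
    also have "\<dots> \<le> M * (M ^ n * fock_norm \<nu> (\<lambda>_. 1))"
      using Suc.IH M0 by (intro mult_left_mono) auto
    finally show ?case using mem by simp
  qed
  define E1 where "E1 = enn2real (fock_integral \<nu> (\<lambda>_. 1))"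
  have intb: "enn2real (fock_integral \<nu> (\<lambda>u. h u ^ n)) \<le> (M powr \<nu>) ^ n * E1" for n
  proof -
    have "enn2real (fock_integral \<nu> (\<lambda>u. h u ^ n)) \<le> (M ^ n) powr \<nu> * E1"
      unfolding E1_def using M0 by (intro fock_norm_to_int[OF nu] conjunct2[OF hn]) auto
    then show ?thesis using powr_pow_swap[OF M0] by simp
  qed
  have fin: "fock_integral \<nu> (\<lambda>u. h u ^ n) < \<infinity>" for n
    using conjunct1[OF hn] unfolding fock_space_def by auto
  have hb: "cmod (h u) \<le> M" for u
  proof (rule ccontr)
    assume "\<not> cmod (h u) \<le> M"
    then have gt: "cmod (h u) > M" by simp
    define u0 where "u0 = u"
    define m where "m = (cmod (h u0) + M) / 2"
    have mM: "M < m" "m < cmod (h u0)" using gt by (simp_all add: m_def u0_def)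
    have m0: "m \<ge> 0" using mM M0 by linarith
    have cc: "continuous_on UNIV (\<lambda>u. cmod (h u))" using hcont by (intro continuous_intros)
    have "\<exists>d>0. \<forall>x'\<in>UNIV. dist x' u0 < d \<longrightarrow> dist (cmod (h x')) (cmod (h u0)) < cmod (h u0) - m"
      using cc[unfolded continuous_on_iff, rule_format, of u0 "cmod (h u0) - m"] mM by auto
    then obtain r where r: "r > 0" "\<And>u. dist u u0 < r \<Longrightarrow> dist (cmod (h u)) (cmod (h u0)) < cmod (h u0) - m"
      by auto
    have inball: "m ^ n \<le> cmod (h u ^ n)" if "u \<in> ball u0 r" for u n
    proof -
      have "dist u u0 < r" using that by (simp add: dist_commute)
      then have "dist (cmod (h u)) (cmod (h u0)) < cmod (h u0) - m" by (rule r(2))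
      then have "m \<le> cmod (h u)" by (simp add: dist_real_def)
      then show ?thesis using m0 by (simp add: norm_power power_mono)
    qed
    define \<epsilon> where "\<epsilon> = exp (- \<nu> * (cmod u0 + r)\<^sup>2 / 2)"
    define vol where "vol = measure lborel (ball u0 r)"
    have "measure lborel (ball u0 r) \<noteq> 0" using r(1) content_ball_eq_0_iff[of u0 r] by simp
    then have vol_pos: "vol > 0" unfolding vol_def using measure_nonneg[of lborel "ball u0 r"] by linarith
    have emb: "emeasure lborel (ball u0 r) = ennreal vol"
      unfolding vol_def using emeasure_lborel_ball_finite[of u0 r]
      by (intro emeasure_eq_ennreal_measure) auto
    have eps_pos: "\<epsilon> > 0" by (simp add: \<epsilon>_def)
    have low: "(m powr \<nu>) ^ n * (\<epsilon> * vol) \<le> (M powr \<nu>) ^ n * E1" for n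
    proof -
      have "ennreal ((m ^ n) powr \<nu> * \<epsilon>) * emeasure lborel (ball u0 r) \<le> fock_integral \<nu> (\<lambda>u. h u ^ n)"
        unfolding \<epsilon>_def using inball m0 by (intro fock_lower_ball[OF nu]) auto
      then have "ennreal ((m ^ n) powr \<nu> * \<epsilon> * vol) \<le> fock_integral \<nu> (\<lambda>u. h u ^ n)"
        using vol_pos eps_pos by (simp add: emb ennreal_mult[symmetric])
      then have "enn2real (ennreal ((m ^ n) powr \<nu> * \<epsilon> * vol)) \<le> enn2real (fock_integral \<nu> (\<lambda>u. h u ^ n))"
        using fin[of n] by (intro enn2real_mono) auto
      then have "(m ^ n) powr \<nu> * \<epsilon> * vol \<le> enn2real (fock_integral \<nu> (\<lambda>u. h u ^ n))"
        using vol_pos eps_pos by simp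
      then show ?thesis using intb[of n] powr_pow_swap[OF m0] by (simp add: mult.assoc)
    qed
    show False
    proof (rule geometric_contra[of "M powr \<nu>" "m powr \<nu>" "\<epsilon> * vol" E1])
      show "0 \<le> M powr \<nu>" by simp
      show "M powr \<nu> < m powr \<nu>" using nu M0 mM by (intro powr_less_mono2) auto
      show "0 < \<epsilon> * vol" using eps_pos vol_pos by simp
      show "(m powr \<nu>) ^ n * (\<epsilon> * vol) \<le> (M powr \<nu>) ^ n * E1" for n by (rule low)
    qed
  qed
  have hconst: "h u = h b" for u
  proof -
    have "h \<xi> = h 0" for \<xi>
      using Liouville_polynomial[OF hhol, of 0 M 0 \<xi>] hb by simp
    then show ?thesis by metis
  qed
  define c where "c = cmod (h b)"
  have c0: "c \<ge> 0" by (simp add: c_def)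
  have bb: "cnj b * b = of_real ((cmod b)\<^sup>2)"
    by (metis complex_norm_square mult.commute of_real_power)
  have hb_val: "h b = w 0 * exp (of_real ((cmod b)\<^sup>2 / 2))"
    unfolding h_def bb by (simp flip: of_real_diff)
  have c_val: "c = cmod (w 0) * exp ((cmod b)\<^sup>2 / 2)"
    unfolding c_def hb_val by (simp add: norm_mult norm_exp_eq_Re)
  have step: "?W F \<in> fock_space \<nu> \<and> fock_integral \<nu> (?W F) = ennreal (c powr \<nu>) * fock_integral \<nu> F"
    if F: "F \<in> fock_space \<nu>" for F
  proof -
    have Fh: "F holomorphic_on UNIV" using F unfolding fock_space_def by auto
    have Fm[measurable]: "F \<in> borel_measurable borel"
      using holomorphic_on_imp_continuous_on[OF Fh] by (rule borel_measurable_continuous_onI)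
    have "fock_integral \<nu> (?W F) = fock_integral \<nu> (\<lambda>u. h u * F u)" by (rule cv[OF Fh])
    also have "(\<lambda>u. h u * F u) = (\<lambda>u. h b * F u)"
      using hconst by auto
    also have "fock_integral \<nu> (\<lambda>u. h b * F u) = (\<integral>\<^sup>+ z. ennreal (c powr \<nu>) * ennreal (cmod (F z) powr \<nu> * exp (- \<nu> * (cmod z)\<^sup>2 / 2)) \<partial>lborel)"
      unfolding fock_integral_def
      by (intro nn_integral_cong) (simp add: c_def norm_mult powr_mult ennreal_mult[symmetric] mult.assoc)
    also have "\<dots> = ennreal (c powr \<nu>) * fock_integral \<nu> F"
      unfolding fock_integral_def by (intro nn_integral_cmult) (unfold measurable_lborel2, measurable)
    finally show ?thesis using CW F by blast
  qed
  have iter: "(?W ^^ n) F \<in> fock_space \<nu> \<and> fock_integral \<nu> ((?W ^^ n) F) = ennreal ((c ^ n) powr \<nu>) * fock_integral \<nu> F"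
    if F: "F \<in> fock_space \<nu>" for n F
  proof (induction n)
    case 0
    show ?case using F by simp
  next
    case (Suc n)
    have "fock_integral \<nu> ((?W ^^ Suc n) F) = ennreal (c powr \<nu>) * (ennreal ((c ^ n) powr \<nu>) * fock_integral \<nu> F)"
      using step[OF conjunct1[OF Suc.IH]] Suc.IH by simp
    also have "\<dots> = ennreal ((c ^ Suc n) powr \<nu>) * fock_integral \<nu> F"
      using c0 by (simp add: powr_mult ennreal_mult mult.assoc)
    finally show ?case using step[OF conjunct1[OF Suc.IH]] by simp
  qed
  have normn: "fock_norm \<nu> ((?W ^^ n) F) = c ^ n * fock_norm \<nu> F" if F: "F \<in> fock_space \<nu>" for n F
    using c0 by (intro fock_norm_scale[OF nu] conjunct2[OF iter[OF F]]) simp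
  have N1pos: "fock_norm \<nu> (\<lambda>_. 1) > 0"
  proof -
    have "ennreal (1 powr \<nu> * exp (- \<nu> * (cmod (0::complex) + 1)\<^sup>2 / 2)) * emeasure lborel (ball (0::complex) 1) \<le> fock_integral \<nu> (\<lambda>_. 1)"
      by (intro fock_lower_ball[OF nu]) auto
    moreover have "emeasure lborel (ball (0::complex) 1) > 0"
    proof -
      have "measure lborel (ball (0::complex) 1) \<noteq> 0" using content_ball_eq_0_iff[of "0::complex" 1] by simp
      then have "measure lborel (ball (0::complex) 1) > 0" using measure_nonneg[of lborel "ball (0::complex) 1"] by linarith
      moreover have "emeasure lborel (ball (0::complex) 1) = ennreal (measure lborel (ball (0::complex) 1))"
        using emeasure_lborel_ball_finite[of "0::complex" 1] by (intro emeasure_eq_ennreal_measure) auto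
      ultimately show ?thesis by simp
    qed
    moreover have "0 < ennreal (1 powr \<nu> * exp (- \<nu> * (cmod (0::complex) + 1)\<^sup>2 / 2))"
      by simp
    ultimately have "fock_integral \<nu> (\<lambda>_. 1) > 0"
      using ennreal_zero_less_mult_iff order_less_le_trans by metis
    then have "E1 > 0" unfolding E1_def using fock_one_finite[OF assms(1)]
      by (simp add: enn2real_positive_iff)
    then show ?thesis unfolding fock_norm_def E1_def[symmetric] using nu by simp
  qed
  have equiv: "c \<le> 1 \<longleftrightarrow> cmod (w 0) \<le> exp (- (cmod b)\<^sup>2 / 2)"
    unfolding c_val by (simp add: exp_minus field_simps)
  show ?thesis
  proof
    assume "power_bounded_on_fock \<nu> ?W"
    then obtain K where K: "\<forall>n\<ge>1. \<forall>f\<in>fock_space \<nu>. fock_norm \<nu> ((?W ^^ n) f) \<le> K * fock_norm \<nu> f"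
      unfolding power_bounded_on_fock_def by blast
    have "c \<le> 1"
    proof (rule ccontr)
      assume "\<not> c \<le> 1"
      then have c1: "c > 1" by simp
      have cK: "c ^ n \<le> K" if "n \<ge> 1" for n
      proof -
        have "c ^ n * fock_norm \<nu> (\<lambda>_. 1) \<le> K * fock_norm \<nu> (\<lambda>_. 1)"
          using K that one_fs normn[OF one_fs, of n] by metis
        then show ?thesis using N1pos by simp
      qed
      obtain n where n: "K < c ^ n" using real_arch_pow[OF c1] by blast
      show False
      proof (cases "n = 0")
        case True
        then show False using n cK[of 1] c1 by simp
      next
        case False
        then show False using n cK[of n] by simp
      qed
    qed
    then show "cmod (w 0) \<le> exp (- (cmod b)\<^sup>2 / 2)" using equiv by simp
  next
    assume "cmod (w 0) \<le> exp (- (cmod b)\<^sup>2 / 2)"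
    then have c1: "c \<le> 1" using equiv by simp
    show "power_bounded_on_fock \<nu> ?W"
      unfolding power_bounded_on_fock_def
    proof (intro exI[of _ 1] allI impI ballI)
      fix n :: nat and f assume "f \<in> fock_space \<nu>"
      then have "fock_norm \<nu> ((?W ^^ n) f) = c ^ n * fock_norm \<nu> f" by (rule normn)
      also have "\<dots> \<le> 1 * fock_norm \<nu> f"
        using c0 c1 norm_nonneg by (intro mult_right_mono power_le_one) auto
      finally show "fock_norm \<nu> ((?W ^^ n) f) \<le> 1 * fock_norm \<nu> f" .
    qed
  qed
qed

end
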